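(* Let $(Y_t,X_t)_{t\ge1}$ be a hidden Markov model with finite state space $S$, $T\ge1$, and $x^T\in\mathcal X^T$ with $p(x^T)>0$. For each $k\in\{1,\dots,T\}$ let $v(x^T;k)$ be any minimizer over $s^T\in S^T$ of $\bar R_k(s^T|x^T)$. Then: (i) for every $k\in\{1,\dots,T\}$ and every $s^T\in S^T$, $\bar R_k(s^T|x^T)=(k-1)\bar R_\infty(s^T|x^T)+\bar R_1(s^T|x^T)$; (ii) for every $k\in\{2,\dots,T\}$, $v(x^T;k)$ is admissible, i.e. $p(v(x^T;k)|x^T)>0$; (iii) for every $k\in\{2,\dots,T\}$, $\bar R_\infty(v(x^T;k)|x^T)\le\bar R_\infty(v(x^T;k-1)|x^T)$; (iv) for every $k\in\{2,\dots,T\}$, $\bar R_1(v(x^T;k)|x^T)\ge\bar R_1(v(x^T;k-1)|x^T)$.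
   Context: Hidden Markov model: $Y$ is a Markov chain on finite $S$; given $Y$, the $X_t$ are conditionally independent and $X_t$ has density $f_s$ when $Y_t=s$. Posterior path law $p(s^T|x^T)=\mathbf P(Y^T=s^T|X^T=x^T)$; for $1\le a\le b\le T$, $p(s_a^b|x^T)=\mathbf P(Y_a^b=s_a^b|X^T=x^T)$ with $s_a^b=(s_a,\dots,s_b)$. For a positive integer $k$: $\bar R_k(s^T|x^T)=-\frac1T\ln\prod_{j=1-k}^{T-1}p(s_{(j+1)\vee1}^{(j+k)\wedge T}|x^T)$ (so $\bar R_1(s^T|x^T)=-\frac1T\sum_{t=1}^T\ln\mathbf P(Y_t=s_t|X^T=x^T)$), and $\bar R_\infty(s^T|x^T)=-\frac1T\ln p(s^T|x^T)$. Here $\vee=\max$, $\wedge=\min$, $\ln0=-\infty$. *)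

theory Defs
  imports "HOL-Analysis.Analysis"
begin

definition paths :: "nat \<Rightarrow> (nat \<Rightarrow> 's) set" where
  "paths T = {1..T} \<rightarrow>\<^sub>E (UNIV :: 's set)"

definition hmm_joint ::
  "('s \<Rightarrow> real) \<Rightarrow> ('s \<Rightarrow> 's \<Rightarrow> real) \<Rightarrow> ('s \<Rightarrow> 'x \<Rightarrow> real) \<Rightarrow> nat
    \<Rightarrow> (nat \<Rightarrow> 'x) \<Rightarrow> (nat \<Rightarrow> 's) \<Rightarrow> real" where
  "hmm_joint p0 P f T x s =
     p0 (s 1) * (\<Prod>t\<in>{1..<T}. P (s t) (s (Suc t))) * (\<Prod>t\<in>{1..T}. f (s t) (x t))"

definition hmm_px ::
  "('s::finite \<Rightarrow> real) \<Rightarrow> ('s \<Rightarrow> 's \<Rightarrow> real) \<Rightarrow> ('s \<Rightarrow> 'x \<Rightarrow> real) \<Rightarrow> nat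
    \<Rightarrow> (nat \<Rightarrow> 'x) \<Rightarrow> real" where
  "hmm_px p0 P f T x = (\<Sum>s\<in>paths T. hmm_joint p0 P f T x s)"

definition hmm_post ::
  "('s::finite \<Rightarrow> real) \<Rightarrow> ('s \<Rightarrow> 's \<Rightarrow> real) \<Rightarrow> ('s \<Rightarrow> 'x \<Rightarrow> real) \<Rightarrow> nat
    \<Rightarrow> (nat \<Rightarrow> 'x) \<Rightarrow> nat \<Rightarrow> nat \<Rightarrow> (nat \<Rightarrow> 's) \<Rightarrow> real" where
  "hmm_post p0 P f T x a b s =
     (\<Sum>s'\<in>paths T. if (\<forall>t\<in>{a..b}. s' t = s t) then hmm_joint p0 P f T x s' else 0)
       / hmm_px p0 P f T x"

definition eln :: "real \<Rightarrow> ereal" where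
  "eln y = (if y > 0 then ereal (ln y) else -\<infinity>)"

definition Rbar ::
  "('s::finite \<Rightarrow> real) \<Rightarrow> ('s \<Rightarrow> 's \<Rightarrow> real) \<Rightarrow> ('s \<Rightarrow> 'x \<Rightarrow> real) \<Rightarrow> nat
    \<Rightarrow> (nat \<Rightarrow> 'x) \<Rightarrow> nat \<Rightarrow> (nat \<Rightarrow> 's) \<Rightarrow> ereal" where
  "Rbar p0 P f T x k s =
     ereal (1 / real T) * - eln (\<Prod>j\<in>{1 - int k .. int T - 1}.
        hmm_post p0 P f T x (nat (max (j + 1) 1)) (nat (min (j + int k) (int T))) s)"

definition Rbar_inf ::
  "('s::finite \<Rightarrow> real) \<Rightarrow> ('s \<Rightarrow> 's \<Rightarrow> real) \<Rightarrow> ('s \<Rightarrow> 'x \<Rightarrow> real) \<Rightarrow> nat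
    \<Rightarrow> (nat \<Rightarrow> 'x) \<Rightarrow> (nat \<Rightarrow> 's) \<Rightarrow> ereal" where
  "Rbar_inf p0 P f T x s = ereal (1 / real T) * - eln (hmm_post p0 P f T x 1 T s)"

end

theory Submission
  imports Defs
begin

locale hmmc =
  fixes p0 :: "'s::finite \<Rightarrow> real" and P :: "'s \<Rightarrow> 's \<Rightarrow> real"
    and f :: "'s \<Rightarrow> 'x \<Rightarrow> real" and T :: nat and x :: "nat \<Rightarrow> 'x"
  assumes p0_nn: "\<And>i. p0 i \<ge> 0" and P_nn: "\<And>i j. P i j \<ge> 0"
    and f_nn: "\<And>i y. f i y \<ge> 0" and T1: "T \<ge> 1" and Zpos: "hmm_px p0 P f T x > 0"
begin

abbreviation "J \<equiv> hmm_joint p0 P f T x"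
abbreviation "Z \<equiv> hmm_px p0 P f T x"
definition "N a b s = (\<Sum>s'\<in>paths T. if (\<forall>t\<in>{a..b}. s' t = s t) then J s' else 0)"

lemma post_N: "hmm_post p0 P f T x a b s = N a b s / Z"
  by (simp add: hmm_post_def N_def)

lemma J_nn: "J s \<ge> 0"
  unfolding hmm_joint_def by (intro mult_nonneg_nonneg prod_nonneg p0_nn P_nn f_nn)

lemma fin_paths: "finite (paths T :: (nat \<Rightarrow> 's) set)"
  unfolding paths_def by (intro finite_PiE) simp_all

lemma N_alt: "N a b s = (\<Sum>s'\<in>{s'\<in>paths T. \<forall>t\<in>{a..b}. s' t = s t}. J s')"
  unfolding N_def by (simp add: sum.inter_filter[OF fin_paths])

lemma factor:
  assumes "1 \<le> a" "a \<le> b" "b \<le> c" "c \<le> T"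
  shows "N a c s =
    (\<Sum>p\<in>{p \<in> {1..b} \<rightarrow>\<^sub>E UNIV. \<forall>t\<in>{a..b}. p t = s t}.
        p0 (p 1) * (\<Prod>t\<in>{1..<b}. P (p t) (p (Suc t))) * (\<Prod>t\<in>{1..b}. f (p t) (x t)))
   * (\<Sum>q\<in>{q \<in> {Suc b..T} \<rightarrow>\<^sub>E UNIV. \<forall>t\<in>{Suc b..c}. q t = s t}.
        (\<Prod>t\<in>{b..<T}. P (if t = b then s b else q t) (q (Suc t))) * (\<Prod>t\<in>{Suc b..T}. f (q t) (x t)))"
    (is "_ = sum ?L ?A * sum ?R ?B")
proof -
  define mg where "mg = (\<lambda>(p::nat\<Rightarrow>'s, q::nat\<Rightarrow>'s). (\<lambda>t. if t \<in> {1..b} then p t else q t))"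
  have "sum ?L ?A * sum ?R ?B = (\<Sum>(p,q)\<in>?A \<times> ?B. ?L p * ?R q)"
    by (simp add: sum_product sum.cartesian_product)
  also have "\<dots> = (\<Sum>s'\<in>{s'\<in>paths T. \<forall>t\<in>{a..c}. s' t = s t}. J s')"
  proof (rule sum.reindex_bij_witness[where j = mg and i = "\<lambda>s'. (restrict s' {1..b}, restrict s' {Suc b..T})"])
    fix pq assume "pq \<in> ?A \<times> ?B"
    then show "(\<lambda>s'. (restrict s' {1..b}, restrict s' {Suc b..T})) (mg pq) = pq"
      by (cases pq) (auto simp: mg_def fun_eq_iff PiE_def extensional_def)
  next
    fix pq assume "pq \<in> ?A \<times> ?B"
    then show "mg pq \<in> {s'\<in>paths T. \<forall>t\<in>{a..c}. s' t = s t}"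
      using assms by (cases pq) (auto simp: mg_def paths_def PiE_def extensional_def)
  next
    fix s' assume "s' \<in> {s'\<in>paths T. \<forall>t\<in>{a..c}. s' t = s t}"
    then show "mg (restrict s' {1..b}, restrict s' {Suc b..T}) = s'"
      by (auto simp: mg_def fun_eq_iff paths_def PiE_def extensional_def)
  next
    fix s' assume "s' \<in> {s'\<in>paths T. \<forall>t\<in>{a..c}. s' t = s t}"
    then show "(restrict s' {1..b}, restrict s' {Suc b..T}) \<in> ?A \<times> ?B"
      using assms by (auto simp: paths_def)
  next
    fix pq assume pq: "pq \<in> ?A \<times> ?B"
    obtain p q where pqd: "pq = (p,q)" by (cases pq)
    have pb: "p b = s b" using pq pqd assms by auto
    let ?m = "mg (p,q)"
    have m1: "?m 1 = p 1" using assms by (simp add: mg_def)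
    have e1: "(\<Prod>t\<in>{1..<T}. P (?m t) (?m (Suc t))) =
       (\<Prod>t\<in>{1..<b}. P (p t) (p (Suc t))) * (\<Prod>t\<in>{b..<T}. P (if t = b then s b else q t) (q (Suc t)))"
    proof -
      have "{1..<T} = {1..<b} \<union> {b..<T}" using assms by auto
      then have "(\<Prod>t\<in>{1..<T}. P (?m t) (?m (Suc t))) =
         (\<Prod>t\<in>{1..<b}. P (?m t) (?m (Suc t))) * (\<Prod>t\<in>{b..<T}. P (?m t) (?m (Suc t)))"
        by (simp add: prod.union_disjoint ivl_disj_int)
      also have "(\<Prod>t\<in>{1..<b}. P (?m t) (?m (Suc t))) = (\<Prod>t\<in>{1..<b}. P (p t) (p (Suc t)))"
        by (rule prod.cong) (auto simp: mg_def)
      also have "(\<Prod>t\<in>{b..<T}. P (?m t) (?m (Suc t))) = (\<Prod>t\<in>{b..<T}. P (if t = b then s b else q t) (q (Suc t)))"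
        using pb assms by (intro prod.cong) (auto simp: mg_def)
      finally show ?thesis .
    qed
    have e2: "(\<Prod>t\<in>{1..T}. f (?m t) (x t)) =
       (\<Prod>t\<in>{1..b}. f (p t) (x t)) * (\<Prod>t\<in>{Suc b..T}. f (q t) (x t))"
    proof -
      have "{1..T} = {1..b} \<union> {Suc b..T}" using assms by auto
      then have "(\<Prod>t\<in>{1..T}. f (?m t) (x t)) =
         (\<Prod>t\<in>{1..b}. f (?m t) (x t)) * (\<Prod>t\<in>{Suc b..T}. f (?m t) (x t))"
        by (simp add: prod.union_disjoint)
      also have "(\<Prod>t\<in>{1..b}. f (?m t) (x t)) = (\<Prod>t\<in>{1..b}. f (p t) (x t))"
        by (rule prod.cong) (auto simp: mg_def)
      also have "(\<Prod>t\<in>{Suc b..T}. f (?m t) (x t)) = (\<Prod>t\<in>{Suc b..T}. f (q t) (x t))"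
        by (rule prod.cong) (auto simp: mg_def)
      finally show ?thesis .
    qed
    show "J (mg pq) = (case pq of (p,q) \<Rightarrow> ?L p * ?R q)"
      unfolding pqd hmm_joint_def m1 e1 e2 by simp
  qed
  finally show ?thesis by (simp add: N_alt)
qed

lemma markov:
  assumes "1 \<le> a" "a \<le> b" "b \<le> c" "c \<le> T"
  shows "N a c s * N b b s = N a b s * N b c s"
proof -
  note f1 = factor[OF assms(1,2,3,4), of s]
  note f2 = factor[of b b b s] 
  note f3 = factor[of a b b s]
  note f4 = factor[of b b c s]
  have "1 \<le> b" "b \<le> T" using assms by auto
  then show ?thesis using f1 f2 f3 f4 assms by simp
qed

abbreviation "pt a b s \<equiv> hmm_post p0 P f T x a b s"

lemma markov_pt:
  assumes "1 \<le> a" "a \<le> b" "b \<le> c" "c \<le> T"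
  shows "pt a c s * pt b b s = pt a b s * pt b c s"
  using markov[OF assms, of s] by (simp add: post_N)

lemma N_nn: "N a b s \<ge> 0"
  unfolding N_def by (intro sum_nonneg) (simp add: J_nn)

lemma N_mono: "a \<le> a' \<Longrightarrow> b' \<le> b \<Longrightarrow> N a b s \<le> N a' b' s"
  unfolding N_def by (intro sum_mono) (auto simp: J_nn)

lemma N_le: "N a b s \<le> Z"
  unfolding N_def hmm_px_def by (intro sum_mono) (auto simp: J_nn)

lemma pt_nn: "pt a b s \<ge> 0" using N_nn Zpos by (simp add: post_N)
lemma pt_le1: "pt a b s \<le> 1" using N_le Zpos by (simp add: post_N)
lemma pt_mono: "a \<le> a' \<Longrightarrow> b' \<le> b \<Longrightarrow> pt a b s \<le> pt a' b' s"
  using N_mono Zpos by (simp add: post_N divide_right_mono)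

definition "rr s t = pt t (Suc t) s / (pt t t s * pt (Suc t) (Suc t) s)"

lemma chain:
  assumes "1 \<le> a" "a \<le> b" "b \<le> T" "\<forall>t\<in>{a..b}. pt t t s > 0"
  shows "pt a b s = (\<Prod>t\<in>{a..b}. pt t t s) * (\<Prod>t\<in>{a..<b}. rr s t)"
  using assms(2-4)
proof (induction b rule: dec_induct)
  case base
  then show ?case by simp
next
  case (step n)
  have IH: "pt a n s = (\<Prod>t\<in>{a..n}. pt t t s) * (\<Prod>t\<in>{a..<n}. rr s t)"
    using step by auto
  have mn: "pt n n s > 0" "pt (Suc n) (Suc n) s > 0" using step by auto
  have mk: "pt a (Suc n) s * pt n n s = pt a n s * pt n (Suc n) s"
    using markov_pt[of a n "Suc n" s] assms step by auto
  then have "pt a (Suc n) s = pt a n s * pt n (Suc n) s / pt n n s"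
    using mn by (simp add: field_simps)
  also have "\<dots> = (\<Prod>t\<in>{a..Suc n}. pt t t s) * (\<Prod>t\<in>{a..<Suc n}. rr s t)"
    unfolding IH using mn step(1) by (simp add: prod.atLeastLessThan_Suc rr_def field_simps)
  finally show ?case .
qed


definition "W k s = (\<Prod>j\<in>{1 - int k .. int T - 1}.
        pt (nat (max (j + 1) 1)) (nat (min (j + int k) (int T))) s)"

lemma card_m:
  assumes "k \<ge> 1" "t \<in> {1..T}"
  shows "card {j \<in> {1 - int k .. int T - 1}. nat (max (j + 1) 1) \<le> t \<and> t \<le> nat (min (j + int k) (int T))} = k"
proof -
  have "{j \<in> {1 - int k .. int T - 1}. nat (max (j + 1) 1) \<le> t \<and> t \<le> nat (min (j + int k) (int T))}
     = {int t - int k .. int t - 1}" using assms by auto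
  then show ?thesis by simp
qed

lemma card_r:
  assumes "k \<ge> 1" "t \<in> {1..<T}"
  shows "card {j \<in> {1 - int k .. int T - 1}. nat (max (j + 1) 1) \<le> t \<and> t < nat (min (j + int k) (int T))} = k - 1"
proof -
  have "{j \<in> {1 - int k .. int T - 1}. nat (max (j + 1) 1) \<le> t \<and> t < nat (min (j + int k) (int T))}
     = {int t + 1 - int k .. int t - 1}" using assms by auto
  then show ?thesis using assms by simp
qed

lemma win_bounds: "j \<in> {1 - int k .. int T - 1} \<Longrightarrow> k \<ge> 1 \<Longrightarrow> T \<ge> 1 \<Longrightarrow> 1 \<le> nat (max (j + 1) 1) \<and> nat (max (j + 1) 1) \<le> nat (min (j + int k) (int T)) \<and> nat (min (j + int k) (int T)) \<le> T"
  by auto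

lemma W_formula:
  assumes k: "k \<ge> 1" and pos: "\<forall>t\<in>{1..T}. pt t t s > 0"
  shows "W k s = pt 1 T s ^ (k - 1) * (\<Prod>t\<in>{1..T}. pt t t s)"
proof -
  define JJ where "JJ = {1 - int k .. int T - 1}"
  define lo where "lo j = nat (max (j + 1) 1)" for j
  define hi where "hi j = nat (min (j + int k) (int T))" for j
  have b: "1 \<le> lo j" "lo j \<le> hi j" "hi j \<le> T" if "j \<in> JJ" for j
    using win_bounds[of j k] that k T1 unfolding lo_def hi_def JJ_def by blast+
  have "W k s = (\<Prod>j\<in>JJ. (\<Prod>t\<in>{lo j..hi j}. pt t t s) * (\<Prod>t\<in>{lo j..<hi j}. rr s t))"
    unfolding W_def JJ_def[symmetric] lo_def[symmetric] hi_def[symmetric]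
  proof (rule prod.cong[OF refl])
    fix j assume j: "j \<in> JJ"
    show "pt (lo j) (hi j) s = (\<Prod>t\<in>{lo j..hi j}. pt t t s) * (\<Prod>t\<in>{lo j..<hi j}. rr s t)"
      using b[OF j] pos by (intro chain) auto
  qed
  also have "\<dots> = (\<Prod>j\<in>JJ. \<Prod>t\<in>{t\<in>{1..T}. lo j \<le> t \<and> t \<le> hi j}. pt t t s) *
                    (\<Prod>j\<in>JJ. \<Prod>t\<in>{t\<in>{1..<T}. lo j \<le> t \<and> t < hi j}. rr s t)"
  proof -
    have e: "{lo j..hi j} = {t\<in>{1..T}. lo j \<le> t \<and> t \<le> hi j}"
            "{lo j..<hi j} = {t\<in>{1..<T}. lo j \<le> t \<and> t < hi j}" if j: "j \<in> JJ" for j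
      using b[OF j] by auto
    show ?thesis unfolding prod.distrib by (intro arg_cong2[where f = "(*)"] prod.cong refl) (simp_all add: e)
  qed
  also have "\<dots> = (\<Prod>t\<in>{1..T}. \<Prod>j\<in>{j\<in>JJ. lo j \<le> t \<and> t \<le> hi j}. pt t t s) *
                    (\<Prod>t\<in>{1..<T}. \<Prod>j\<in>{j\<in>JJ. lo j \<le> t \<and> t < hi j}. rr s t)"
  proof -
    have s1: "(\<Prod>j\<in>JJ. \<Prod>t\<in>{t\<in>{1..T}. lo j \<le> t \<and> t \<le> hi j}. pt t t s) =
       (\<Prod>t\<in>{1..T}. \<Prod>j\<in>{j\<in>JJ. lo j \<le> t \<and> t \<le> hi j}. pt t t s)"
      by (rule prod.swap_restrict) (simp_all add: JJ_def)
    have s2: "(\<Prod>j\<in>JJ. \<Prod>t\<in>{t\<in>{1..<T}. lo j \<le> t \<and> t < hi j}. rr s t) =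
       (\<Prod>t\<in>{1..<T}. \<Prod>j\<in>{j\<in>JJ. lo j \<le> t \<and> t < hi j}. rr s t)"
      by (rule prod.swap_restrict) (simp_all add: JJ_def)
    show ?thesis by (simp only: s1 s2)
  qed
  also have "\<dots> = (\<Prod>t\<in>{1..T}. pt t t s ^ k) * (\<Prod>t\<in>{1..<T}. rr s t ^ (k - 1))"
  proof -
    have c1: "(\<Prod>j\<in>{j\<in>JJ. lo j \<le> t \<and> t \<le> hi j}. pt t t s) = pt t t s ^ k" if "t\<in>{1..T}" for t
      using card_m[OF k that] by (simp add: JJ_def lo_def hi_def)
    have c2: "(\<Prod>j\<in>{j\<in>JJ. lo j \<le> t \<and> t < hi j}. rr s t) = rr s t ^ (k - 1)" if "t\<in>{1..<T}" for t
      using card_r[OF k that] by (simp add: JJ_def lo_def hi_def)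
    show ?thesis using c1 c2 by simp
  qed
  also have "\<dots> = ((\<Prod>t\<in>{1..T}. pt t t s) * (\<Prod>t\<in>{1..<T}. rr s t)) ^ (k - 1) * (\<Prod>t\<in>{1..T}. pt t t s)"
  proof -
    obtain k' where kk: "k = Suc k'" using k by (cases k) auto
    show ?thesis unfolding kk by (simp add: prod_power_distrib power_mult_distrib prod.distrib mult_ac)
  qed
  also have "(\<Prod>t\<in>{1..T}. pt t t s) * (\<Prod>t\<in>{1..<T}. rr s t) = pt 1 T s"
    using chain[of 1 T s] pos T1 by simp
  finally show ?thesis .
qed

lemma W1: "W 1 s = (\<Prod>t\<in>{1..T}. pt t t s)"
  unfolding W_def
proof (rule sym, rule prod.reindex_bij_witness[where i = "\<lambda>j. nat (j+1)" and j = "\<lambda>t. int t - 1"])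
  fix t assume "t \<in> {1..T}" then show "nat ((int t - 1) + 1) = t" by simp
next
  fix t assume "t \<in> {1..T}" then show "int t - 1 \<in> {1 - int 1..int T - 1}" by auto
next
  fix j assume "j \<in> {1 - int 1..int T - 1}" then show "int (nat (j + 1)) - 1 = j" by auto
next
  fix j assume "j \<in> {1 - int 1..int T - 1}" then show "nat (j + 1) \<in> {1..T}" by auto
next
  fix t assume t: "t \<in> {1..T}"
  have "nat (max (int t - 1 + 1) 1) = t" "nat (min (int t - 1 + int 1) (int T)) = t" using t by auto
  then show "pt (nat (max (int t - 1 + 1) 1)) (nat (min (int t - 1 + int 1) (int T))) s = pt t t s"
    by simp
qed

lemma W_zero:
  assumes k: "k \<ge> 1" and t: "t \<in> {1..T}" and z: "pt t t s = 0"
  shows "W k s = 0"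
proof -
  let ?j = "int t - 1"
  have j: "?j \<in> {1 - int k .. int T - 1}" using k t by auto
  have lo: "nat (max (?j + 1) 1) = t" using t by auto
  have hi: "t \<le> nat (min (?j + int k) (int T))" using t k by auto
  have "pt (nat (max (?j + 1) 1)) (nat (min (?j + int k) (int T))) s \<le> pt t t s"
    unfolding lo using hi by (intro pt_mono) auto
  then have "pt (nat (max (?j + 1) 1)) (nat (min (?j + int k) (int T))) s = 0"
    using z pt_nn by (metis order_antisym)
  then show ?thesis unfolding W_def by (intro prod_zero finite_atLeastAtMost_int bexI[OF _ j])
qed

lemma Rbar_W: "Rbar p0 P f T x k s = ereal (1 / real T) * - eln (W k s)"
  by (simp add: Rbar_def W_def)

lemma Rinf': "Rbar_inf p0 P f T x s = ereal (1 / real T) * - eln (pt 1 T s)"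
  by (simp add: Rbar_inf_def)

lemma neg_eln_nn: "y \<le> 1 \<Longrightarrow> 0 \<le> ereal (1 / real T) * - eln y"
  using T1 by (cases "y > 0") (auto simp: eln_def divide_nonpos_nonneg)   

lemma W_le1: "W k s \<le> 1"
  unfolding W_def by (intro prod_le_1) (auto simp: pt_nn pt_le1)

lemma Rinf_nn: "Rbar_inf p0 P f T x s \<ge> 0"
  unfolding Rinf' by (rule neg_eln_nn) (rule pt_le1)

lemma Rbar_nn: "Rbar p0 P f T x k s \<ge> 0"
  unfolding Rbar_W by (rule neg_eln_nn) (rule W_le1)

lemma inf_plus: "(a::ereal) \<ge> 0 \<Longrightarrow> b = \<infinity> \<Longrightarrow> a + b = \<infinity>" by simp
lemma plus_inf: "(b::ereal) \<ge> 0 \<Longrightarrow> a = \<infinity> \<Longrightarrow> a + b = \<infinity>" by simp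

lemma R_inf_when0: "y \<le> 0 \<Longrightarrow> ereal (1 / real T) * - eln y = \<infinity>"
  using T1 by (simp add: eln_def)

lemma decomp:
  assumes k: "k \<ge> 1"
  shows "Rbar p0 P f T x k s = ereal (real k - 1) * Rbar_inf p0 P f T x s + Rbar p0 P f T x 1 s"
proof (cases "k = 1")
  case True then show ?thesis by (simp add: zero_ereal_def[symmetric])
next
  case False
  then have k2: "k \<ge> 2" using k by simp
  have pn: "0 \<le> ereal (real k - 1) * Rbar_inf p0 P f T x s"
    using Rinf_nn[of s] k by (intro ereal_0_le_mult) auto   
  show ?thesis
  proof (cases "\<exists>t\<in>{1..T}. pt t t s = 0")
    case True
    then obtain t where t: "t \<in> {1..T}" "pt t t s = 0" by blast
    have "Rbar p0 P f T x k s = \<infinity>" unfolding Rbar_W using W_zero[OF k t] by (intro R_inf_when0) simp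
    moreover have "Rbar p0 P f T x 1 s = \<infinity>" unfolding Rbar_W using W_zero[OF _ t] by (intro R_inf_when0) simp
    ultimately show ?thesis using pn by simp
  next
    case False
    then have pos: "\<forall>t\<in>{1..T}. pt t t s > 0" using pt_nn by (metis less_eq_real_def)
    define M where "M = (\<Prod>t\<in>{1..T}. pt t t s)"
    have M: "M > 0" unfolding M_def using pos by (intro prod_pos) auto
    have Wk: "W k s = pt 1 T s ^ (k - 1) * M" unfolding M_def by (rule W_formula[OF k pos])
    have W1': "W 1 s = M" unfolding M_def by (rule W1)
    have R1: "Rbar p0 P f T x 1 s = ereal (- ln M / real T)"
      unfolding Rbar_W W1' using M by (simp add: eln_def)
    show ?thesis
    proof (cases "pt 1 T s > 0")
      case True
      have lnW: "ln (W k s) = real (k - 1) * ln (pt 1 T s) + ln M"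
        unfolding Wk using True M by (simp add: ln_mult ln_realpow)
      have "W k s > 0" unfolding Wk using True M by simp
      then have "Rbar p0 P f T x k s = ereal (- (real (k - 1) * ln (pt 1 T s) + ln M) / real T)"
        unfolding Rbar_W eln_def lnW by simp
      moreover have "Rbar_inf p0 P f T x s = ereal (- ln (pt 1 T s) / real T)"
        unfolding Rinf' eln_def using True by simp
      ultimately show ?thesis unfolding R1 using k T1 by (simp add: of_nat_diff) (simp add: divide_simps algebra_simps)
    next
      case False
      then have f0: "pt 1 T s = 0" using pt_nn by (metis less_eq_real_def)
      have "W k s = 0" unfolding Wk f0 using k2 by simp
      then have "Rbar p0 P f T x k s = \<infinity>" unfolding Rbar_W by (intro R_inf_when0) simp
      moreover have "Rbar_inf p0 P f T x s = \<infinity>" unfolding Rinf' f0 by (intro R_inf_when0) simp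
      moreover have "ereal (real k - 1) * \<infinity> = \<infinity>" using k2 by simp
      ultimately show ?thesis unfolding R1 by simp
    qed
  qed
qed

lemma exists_good: "\<exists>s0\<in>paths T. pt 1 T s0 > 0"
proof -
  obtain s0 where s0: "s0 \<in> paths T" "J s0 > 0"
  proof (rule ccontr)
    assume "\<not> thesis"
    with that have "\<forall>s\<in>paths T. J s \<le> 0" by (metis not_le)
    then have "Z \<le> 0" unfolding hmm_px_def by (intro sum_nonpos) auto
    with Zpos show False by simp
  qed
  have "J s0 \<le> N 1 T s0"
  proof -
    have "(\<lambda>s'. if \<forall>t\<in>{1..T}. s' t = s0 t then J s' else 0) s0 \<le> N 1 T s0"
      unfolding N_def by (rule member_le_sum) (auto simp: J_nn fin_paths s0(1))
    then show ?thesis by simp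
  qed
  then have "N 1 T s0 > 0" using s0 by simp
  then have "pt 1 T s0 > 0" using Zpos by (simp add: post_N)
  then show ?thesis using s0 by blast
qed

lemma fin_of_pos:
  assumes k: "k \<ge> 1" and p: "pt 1 T s > 0"
  shows "Rbar p0 P f T x k s < \<infinity>"
proof -
  have pos: "\<forall>t\<in>{1..T}. pt t t s > 0"
    using p pt_mono by (metis atLeastAtMost_iff less_le_trans)
  have M: "(\<Prod>t\<in>{1..T}. pt t t s) > 0" using pos by (intro prod_pos) auto
  have "W k s > 0" unfolding W_formula[OF k pos] using M p by simp
  then show ?thesis unfolding Rbar_W by (simp add: eln_def)
qed

lemma Rinf_fin: "pt 1 T s > 0 \<Longrightarrow> Rbar_inf p0 P f T x s < \<infinity>"
  unfolding Rinf' by (simp add: eln_def)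

lemma admissible:
  assumes k: "k \<ge> 2" and vmin: "\<forall>s\<in>paths T. Rbar p0 P f T x k v \<le> Rbar p0 P f T x k s"
  shows "pt 1 T v > 0"
proof (rule ccontr)
  assume "\<not> pt 1 T v > 0"
  then have f0: "pt 1 T v \<le> 0" by simp
  obtain s0 where s0: "s0 \<in> paths T" "pt 1 T s0 > 0" using exists_good by blast
  have "Rbar p0 P f T x k v < \<infinity>"
    using vmin s0 fin_of_pos[of k s0] k by (metis le_less_trans one_le_numeral order_trans)
  moreover have "Rbar_inf p0 P f T x v = \<infinity>" unfolding Rinf' by (rule R_inf_when0[OF f0])
  moreover have "ereal (real k - 1) * \<infinity> = \<infinity>" using k by simp
  ultimately show False using decomp[of k v] k Rbar_nn[of 1 v] by simp
qed

lemma ereal_fin_nn: "(a::ereal) \<ge> 0 \<Longrightarrow> a < \<infinity> \<Longrightarrow> \<exists>A. a = ereal A \<and> A \<ge> 0"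
  by (cases a) auto

lemma mono_step:
  assumes k: "k \<ge> 2" and pv: "pt 1 T v > 0"
    and m1: "Rbar p0 P f T x k v \<le> Rbar p0 P f T x k v'"
    and m2: "Rbar p0 P f T x (k - 1) v' \<le> Rbar p0 P f T x (k - 1) v"
  shows "Rbar_inf p0 P f T x v \<le> Rbar_inf p0 P f T x v' \<and> Rbar p0 P f T x 1 v' \<le> Rbar p0 P f T x 1 v"
proof -
  define a where "a = Rbar_inf p0 P f T x v"
  define a' where "a' = Rbar_inf p0 P f T x v'"
  define b where "b = Rbar p0 P f T x 1 v"
  define b' where "b' = Rbar p0 P f T x 1 v'"
  obtain A where A: "a = ereal A" "A \<ge> 0" using ereal_fin_nn[OF Rinf_nn Rinf_fin[OF pv]] a_def by blast
  obtain B where B: "b = ereal B" "B \<ge> 0" using ereal_fin_nn[OF Rbar_nn fin_of_pos[OF _ pv]] b_def by auto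
  have h1: "ereal (real k - 1) * a + b \<le> ereal (real k - 1) * a' + b'"
    using m1 decomp[of k v] decomp[of k v'] k unfolding a_def a'_def b_def b'_def by simp
  have rk: "real (k - 1) - 1 = real k - 2" using k by (simp add: of_nat_diff)
  have h2: "ereal (real k - 2) * a' + b' \<le> ereal (real k - 2) * a + b"
    using m2 decomp[of "k - 1" v] decomp[of "k - 1" v'] k unfolding a_def a'_def b_def b'_def rk by simp
  have a'nn: "a' \<ge> 0" "b' \<ge> 0" unfolding a'_def b'_def by (rule Rinf_nn, rule Rbar_nn)
  show ?thesis
  proof (cases "a' = \<infinity>")
    case True
    show ?thesis
    proof (cases "k = 2")
      case True
      then have "b' \<le> b" using h2 by (simp add: zero_ereal_def[symmetric])
      then show ?thesis using \<open>a' = \<infinity>\<close> unfolding a_def a'_def b_def b'_def by simp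
    next
      case False
      then have "real k - 2 > 0" using k by simp
      then have "ereal (real k - 2) * a' + b' = \<infinity>" using True a'nn by simp
      with h2 A B show ?thesis by simp
    qed
  next
    case False
    obtain A' where A': "a' = ereal A'" using False a'nn by (cases a') auto
    have "b' \<noteq> \<infinity>"
    proof
      assume "b' = \<infinity>"
      then have "ereal (real k - 2) * a' + b' = \<infinity>" using A' k by simp
      with h2 A B show False by simp
    qed
    then obtain B' where B': "b' = ereal B'" using a'nn by (cases b') auto
    have r1: "(real k - 1) * A + B \<le> (real k - 1) * A' + B'" using h1 A B A' B' by simp
    have r2: "(real k - 2) * A' + B' \<le> (real k - 2) * A + B" using h2 A B A' B' by simp
    have AA: "A \<le> A'" using r1 r2 by (simp add: algebra_simps)
    have "(real k - 2) * (A - A') \<le> 0" using AA k by (intro mult_nonneg_nonpos) auto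
    then have "B' \<le> B" using r2 by (simp add: algebra_simps)
    then show ?thesis using AA A B A' B' unfolding a_def a'_def b_def b'_def by simp
  qed
qed

end
theorem corollary6:
  fixes p0 :: "'s::finite \<Rightarrow> real" and P :: "'s \<Rightarrow> 's \<Rightarrow> real"
    and \<mu> :: "'x measure" and f :: "'s \<Rightarrow> 'x \<Rightarrow> real"
    and T :: nat and x :: "nat \<Rightarrow> 'x" and v :: "nat \<Rightarrow> nat \<Rightarrow> 's"
  assumes pi_nonneg: "\<forall>i. p0 i \<ge> 0" and pi_sum: "(\<Sum>i\<in>UNIV. p0 i) = 1"
    and P_nonneg: "\<forall>i j. P i j \<ge> 0" and P_sum: "\<forall>i. (\<Sum>j\<in>UNIV. P i j) = 1"
    and f_meas: "\<forall>i. f i \<in> borel_measurable \<mu>"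
    and f_nonneg: "\<forall>i y. f i y \<ge> 0"
    and f_dens: "\<forall>i. (\<integral>\<^sup>+ y. ennreal (f i y) \<partial>\<mu>) = 1"
    and T_pos: "T \<ge> 1"
    and x_in: "\<forall>t\<in>{1..T}. x t \<in> space \<mu>"
    and px_pos: "hmm_px p0 P f T x > 0"
    and v_min: "\<forall>k\<in>{1..T}. v k \<in> paths T \<and>
                   (\<forall>s\<in>paths T. Rbar p0 P f T x k (v k) \<le> Rbar p0 P f T x k s)"
  shows "(\<forall>k\<in>{1..T}. \<forall>s\<in>paths T.
            Rbar p0 P f T x k s = ereal (real k - 1) * Rbar_inf p0 P f T x s + Rbar p0 P f T x 1 s)
       \<and> (\<forall>k\<in>{2..T}. hmm_post p0 P f T x 1 T (v k) > 0)
       \<and> (\<forall>k\<in>{2..T}. Rbar_inf p0 P f T x (v k) \<le> Rbar_inf p0 P f T x (v (k - 1)))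
       \<and> (\<forall>k\<in>{2..T}. Rbar p0 P f T x 1 (v k) \<ge> Rbar p0 P f T x 1 (v (k - 1)))"
proof -
  interpret H: hmmc p0 P f T x
    using pi_nonneg P_nonneg f_nonneg T_pos px_pos by unfold_locales auto
  have i: "\<forall>k\<in>{1..T}. \<forall>s\<in>paths T.
            Rbar p0 P f T x k s = ereal (real k - 1) * Rbar_inf p0 P f T x s + Rbar p0 P f T x 1 s"
    by (intro ballI H.decomp) simp
  have ii: "\<forall>k\<in>{2..T}. hmm_post p0 P f T x 1 T (v k) > 0"
  proof
    fix k assume k: "k \<in> {2..T}"
    then have "k \<in> {1..T}" by auto
    then show "hmm_post p0 P f T x 1 T (v k) > 0"
      using v_min k by (intro H.admissible[of k]) auto
  qed
  have iii_iv: "Rbar_inf p0 P f T x (v k) \<le> Rbar_inf p0 P f T x (v (k - 1)) \<and>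
      Rbar p0 P f T x 1 (v (k - 1)) \<le> Rbar p0 P f T x 1 (v k)" if k: "k \<in> {2..T}" for k
  proof -
    have k1: "k \<in> {1..T}" "k - 1 \<in> {1..T}" using k by auto
    show ?thesis
    proof (rule H.mono_step)
      show "2 \<le> k" using k by simp
      show "0 < hmm_post p0 P f T x 1 T (v k)" using ii k by blast
      show "Rbar p0 P f T x k (v k) \<le> Rbar p0 P f T x k (v (k - 1))"
        using v_min k1 by blast
      show "Rbar p0 P f T x (k - 1) (v (k - 1)) \<le> Rbar p0 P f T x (k - 1) (v k)"
        using v_min k1 by blast
    qed
  qed
  show ?thesis using i ii iii_iv by blast
qed

end
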